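(* Let $X$ be a Banach space, $k\in\mathbb{N}$, and $(x_s)_{s\in[\mathbb{N}]^k}$ a bounded $k$-sequence in $X$. Let $M\subseteq\mathbb{N}$ be infinite such that $(x_s)_{s\in[M]^k}$ generates a $k$-spreading model $(e_n)_n$ which is Cesàro summable to zero, i.e. $\|\frac1n\sum_{i=1}^n e_i\|_*\to0$. Then for every infinite $L\subseteq M$, $(x_s)_{s\in[L]^k}$ is $k$-Cesàro summable to $0$.
   Context: $[M]^k$: $k$-subsets of $M\subseteq\mathbb{N}$ (increasing enumerations, $M(l)$ the $l$-th element); $M|n=\{M(1),\dots,M(n)\}$. Plegma family: $(s_j)_{j=1}^l$ in $[M]^k$ with $s_1(i)<\dots<s_l(i)$ ($i\le k$), $s_l(i)<s_1(i+1)$ ($i<k$). $(x_s)_{s\in[M]^k}$ generates the Hamel basis $(e_n)$ of a seminormed space $(E,\|\cdot\|_* )$ as a $k$-spreading model if for a null sequence $\delta_l>0$: $|\|\sum_{j=1}^m a_jx_{s_j}\|-\|\sum_{j=1}^m a_je_j\|_*|\le\delta_l$ for all $m\le l$, plegma $(s_j)_{j=1}^m$ in $[M]^k$ with $s_1(1)\ge M(l)$, $a_j\in[-1,1]$. $(x_s)_{s\in[L]^k}$ is $k$-Cesàro summable to $x_0\in X$ if $\binom{n}{k}^{-1}\sum_{s\in[L|n]^k}x_s\to x_0$ in norm as $n\to\infty$. *)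

theory Defs
  imports "HOL-Analysis.Analysis"
begin

text \<open>[M]^k: the k-element subsets of M (identified with increasing enumerations).\<close>
definition ksubsets :: "nat set \<Rightarrow> nat \<Rightarrow> nat set set" where
  "ksubsets M k = {s. s \<subseteq> M \<and> finite s \<and> card s = k}"

text \<open>s(i): the i-th element (1-indexed) of a finite set s in increasing order.\<close>
definition elt :: "nat set \<Rightarrow> nat \<Rightarrow> nat" where
  "elt s i = sorted_list_of_set s ! (i - 1)"

text \<open>M(l): the l-th element (1-indexed) of an infinite set M.\<close>
definition nth_el :: "nat set \<Rightarrow> nat \<Rightarrow> nat" where
  "nth_el M l = enumerate M (l - 1)"

definition restr :: "nat set \<Rightarrow> nat \<Rightarrow> nat set" where
  "restr M n = nth_el M ` {1..n}"

definition plegma :: "nat \<Rightarrow> (nat \<Rightarrow> nat set) \<Rightarrow> nat \<Rightarrow> bool" where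
  "plegma k ss l \<longleftrightarrow>
     (\<forall>i\<in>{1..k}. \<forall>j\<in>{1..<l}. elt (ss j) i < elt (ss (Suc j)) i) \<and>
     (\<forall>i\<in>{1..<k}. elt (ss l) i < elt (ss 1) (Suc i))"

text \<open>The seminormed space (E, norm_* ) with Hamel basis (e_n)_{n\<ge>1} is represented by the
  finitely supported real sequences a with a 0 = 0 (a = \<Sum> a_n e_n), with a seminorm nrm.\<close>
definition fin_coeffs :: "(nat \<Rightarrow> real) set" where
  "fin_coeffs = {a. finite {n. a n \<noteq> 0} \<and> a 0 = 0}"

definition is_seminorm_on_coeffs :: "((nat \<Rightarrow> real) \<Rightarrow> real) \<Rightarrow> bool" where
  "is_seminorm_on_coeffs nrm \<longleftrightarrow>
     (\<forall>a\<in>fin_coeffs. nrm a \<ge> 0) \<and>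
     (\<forall>a\<in>fin_coeffs. \<forall>c. nrm (\<lambda>n. c * a n) = \<bar>c\<bar> * nrm a) \<and>
     (\<forall>a\<in>fin_coeffs. \<forall>b\<in>fin_coeffs. nrm (\<lambda>n. a n + b n) \<le> nrm a + nrm b)"

definition sm_coeffs :: "nat \<Rightarrow> (nat \<Rightarrow> real) \<Rightarrow> nat \<Rightarrow> real" where
  "sm_coeffs m a = (\<lambda>n. if n \<in> {1..m} then a n else 0)"

definition generates_spreading_model ::
  "(nat set \<Rightarrow> 'a::real_normed_vector) \<Rightarrow> nat set \<Rightarrow> nat \<Rightarrow> ((nat \<Rightarrow> real) \<Rightarrow> real) \<Rightarrow> bool" where
  "generates_spreading_model x M k nrm \<longleftrightarrow>
     (\<exists>\<delta>::nat \<Rightarrow> real. (\<forall>l. \<delta> l > 0) \<and> \<delta> \<longlonglongrightarrow> 0 \<and>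
       (\<forall>l m ss a. 1 \<le> m \<and> m \<le> l \<and> (\<forall>j\<in>{1..m}. ss j \<in> ksubsets M k) \<and> plegma k ss m \<and>
          elt (ss 1) 1 \<ge> nth_el M l \<and> (\<forall>j\<in>{1..m}. \<bar>a j\<bar> \<le> 1) \<longrightarrow>
          \<bar>norm (\<Sum>j=1..m. a j *\<^sub>R x (ss j)) - nrm (sm_coeffs m a)\<bar> \<le> \<delta> l))"

definition k_cesaro_summable ::
  "(nat set \<Rightarrow> 'a::real_normed_vector) \<Rightarrow> nat set \<Rightarrow> nat \<Rightarrow> 'a \<Rightarrow> bool" where
  "k_cesaro_summable x L k x0 \<longleftrightarrow>
     (\<lambda>n. (1 / real (n choose k)) *\<^sub>R (\<Sum>s\<in>ksubsets (restr L n) k. x s)) \<longlonglongrightarrow> x0"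

end

theory Submission
  imports Defs "HOL-Real_Asymp.Real_Asymp"
begin


lemma sorted_list_image_mono:
  fixes g :: "nat \<Rightarrow> nat"
  assumes "strict_mono g" "finite u"
  shows "sorted_list_of_set (g ` u) = map g (sorted_list_of_set u)"
proof -
  have s: "sorted_wrt (<) (sorted_list_of_set u)" by (rule strict_sorted_list_of_set)
  have "sorted_wrt (\<lambda>a b. g a < g b) (sorted_list_of_set u)"
    by (rule sorted_wrt_mono_rel[OF _ s]) (use assms(1) in \<open>simp add: strict_mono_def\<close>)
  hence 1: "sorted_wrt (<) (map g (sorted_list_of_set u))" by (simp add: sorted_wrt_map)
  have 2: "sorted_wrt (<) (sorted_list_of_set (g ` u))" by (rule strict_sorted_list_of_set)
  have 3: "set (map g (sorted_list_of_set u)) = set (sorted_list_of_set (g ` u))" using assms(2) by simp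
  show ?thesis using strict_sorted_equal[OF 2 1] 3 by (metis)
qed

lemma elt_image_mono:
  fixes g :: "nat \<Rightarrow> nat"
  assumes "strict_mono g" "finite u" "1 \<le> i" "i \<le> card u"
  shows "elt (g ` u) i = g (elt u i)"
  using assms by (simp add: elt_def sorted_list_image_mono)

lemma elt_in:
  assumes "finite u" "1 \<le> i" "i \<le> card u"
  shows "elt u i \<in> u"
proof -
  have "sorted_list_of_set u ! (i-1) \<in> set (sorted_list_of_set u)"
    using assms by (intro nth_mem) auto
  thus ?thesis using assms by (simp add: elt_def)
qed

lemma elt_less:
  assumes "finite u" "1 \<le> i" "i < card u"
  shows "elt u i < elt u (Suc i)"
proof -
  have "sorted_wrt (<) (sorted_list_of_set u)" by simp
  hence "sorted_list_of_set u ! (i-1) < sorted_list_of_set u ! i"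
    using assms by (subst (asm) sorted_wrt_iff_nth_less) auto
  thus ?thesis using assms by (simp add: elt_def)
qed

lemma ksubsets_image:
  assumes "inj_on g A"
  shows "image g ` ksubsets A k = ksubsets (g ` A) k"
proof
  show "image g ` ksubsets A k \<subseteq> ksubsets (g ` A) k"
  proof
    fix v assume "v \<in> image g ` ksubsets A k"
    then obtain w where w: "w \<subseteq> A" "finite w" "card w = k" "v = g ` w" by (auto simp: ksubsets_def)
    have "inj_on g w" using assms w(1) by (rule inj_on_subset)
    hence "card v = k" using w by (simp add: card_image)
    thus "v \<in> ksubsets (g ` A) k" using w by (auto simp: ksubsets_def)
  qed
next
  show "ksubsets (g ` A) k \<subseteq> image g ` ksubsets A k"
  proof
    fix v assume v: "v \<in> ksubsets (g ` A) k"
    hence "v \<subseteq> g ` A" by (simp add: ksubsets_def)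
    then obtain w where w: "w \<subseteq> A" "v = g ` w" by (auto simp: subset_image_iff)
    have iw: "inj_on g w" using assms w(1) by (rule inj_on_subset)
    have "finite v" "card v = k" using v by (auto simp: ksubsets_def)
    hence "finite w" "card w = k" using w iw by (auto simp: finite_image_iff card_image)
    thus "v \<in> image g ` ksubsets A k" using w by (auto simp: ksubsets_def)
  qed
qed

lemma card_ksubsets: "finite A \<Longrightarrow> card (ksubsets A k) = card A choose k"
  unfolding ksubsets_def using n_subsets[of A k]
  by (simp add: conj_commute) (smt (verit, best) Collect_cong finite_subset)

lemma finite_ksubsets: "finite A \<Longrightarrow> finite (ksubsets A k)"
  unfolding ksubsets_def by (rule finite_subset[of _ "Pow A"]) auto

lemma card_ksubsets_mem:
  assumes "finite A"
  shows "card {u\<in>ksubsets A k. a \<in> u} \<le> (card A - 1) choose (k - 1)"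
proof (cases "a \<in> A \<and> k \<ge> 1")
  case True
  have "{u\<in>ksubsets A k. a \<in> u} \<subseteq> insert a ` ksubsets (A - {a}) (k - 1)"
  proof
    fix u assume u: "u \<in> {u\<in>ksubsets A k. a \<in> u}"
    hence "u - {a} \<in> ksubsets (A - {a}) (k - 1)" by (auto simp: ksubsets_def)
    moreover have "u = insert a (u - {a})" using u by auto
    ultimately show "u \<in> insert a ` ksubsets (A - {a}) (k - 1)" by blast
  qed
  hence "card {u\<in>ksubsets A k. a \<in> u} \<le> card (insert a ` ksubsets (A - {a}) (k - 1))"
    using assms by (intro card_mono finite_imageI finite_ksubsets) auto
  also have "\<dots> \<le> card (ksubsets (A - {a}) (k - 1))" by (rule card_image_le) (simp add: finite_ksubsets assms)
  also have "\<dots> = (card A - 1) choose (k - 1)" using assms True by (simp add: card_ksubsets)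
  finally show ?thesis .
next
  case False
  hence "{u\<in>ksubsets A k. a \<in> u} = {}" by (auto simp: ksubsets_def Suc_le_eq card_gt_0_iff)
  thus ?thesis by (simp only:) simp
qed

lemma card_ksubsets_mem2:
  assumes "finite A" "a \<noteq> b"
  shows "card {u\<in>ksubsets A k. a \<in> u \<and> b \<in> u} \<le> (if k \<ge> 2 then (card A - 2) choose (k - 2) else 0)"
proof (cases "a \<in> A \<and> k \<ge> 2")
  case True
  have "{u\<in>ksubsets A k. a \<in> u \<and> b \<in> u} \<subseteq> insert a ` {v \<in> ksubsets (A - {a}) (k - 1). b \<in> v}"
  proof
    fix u assume u: "u \<in> {u\<in>ksubsets A k. a \<in> u \<and> b \<in> u}"
    hence "u - {a} \<in> {v \<in> ksubsets (A - {a}) (k - 1). b \<in> v}" using assms by (auto simp: ksubsets_def)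
    moreover have "u = insert a (u - {a})" using u by auto
    ultimately show "u \<in> insert a ` {v \<in> ksubsets (A - {a}) (k - 1). b \<in> v}" by blast
  qed
  hence "card {u\<in>ksubsets A k. a \<in> u \<and> b \<in> u} \<le> card (insert a ` {v \<in> ksubsets (A - {a}) (k - 1). b \<in> v})"
    using assms by (intro card_mono finite_imageI) (auto simp: finite_ksubsets)
  also have "\<dots> \<le> card {v \<in> ksubsets (A - {a}) (k - 1). b \<in> v}" by (rule card_image_le) (simp add: finite_ksubsets assms)
  also have "\<dots> \<le> (card (A - {a}) - 1) choose (k - 1 - 1)" using assms by (intro card_ksubsets_mem) auto
  also have "\<dots> = (card A - 2) choose (k - 2)"
  proof -
    have e1: "card (A - {a}) - 1 = card A - 2" using True assms by (simp add: card_Diff_singleton)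
    have e2: "k - 1 - 1 = k - 2" by simp
    show ?thesis by (simp only: e1 e2)
  qed
  finally show ?thesis using True by simp
next
  case False
  have "{u\<in>ksubsets A k. a \<in> u \<and> b \<in> u} = {}"
  proof (rule ccontr)
    assume "{u\<in>ksubsets A k. a \<in> u \<and> b \<in> u} \<noteq> {}"
    then obtain u where u: "u \<in> ksubsets A k" "a \<in> u" "b \<in> u" by blast
    hence "a \<in> A" by (auto simp: ksubsets_def)
    have "card {a,b} \<le> card u" using u by (intro card_mono) (auto simp: ksubsets_def)
    moreover have "card {a,b} = 2" using assms(2) by simp
    moreover have "card u = k" using u(1) by (simp add: ksubsets_def)
    ultimately have "k \<ge> 2" by simp
    thus False using False \<open>a \<in> A\<close> by simp
  qed
  thus ?thesis by (simp only: card.empty le0)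
qed

lemma card_ksubsets_meet:
  assumes "finite A" "finite D"
  shows "card {u\<in>ksubsets A k. u \<inter> D \<noteq> {}} \<le> card D * ((card A - 1) choose (k - 1))"
proof -
  have "{u\<in>ksubsets A k. u \<inter> D \<noteq> {}} \<subseteq> (\<Union>a\<in>D. {u\<in>ksubsets A k. a \<in> u})" by blast
  hence "card {u\<in>ksubsets A k. u \<inter> D \<noteq> {}} \<le> card (\<Union>a\<in>D. {u\<in>ksubsets A k. a \<in> u})"
    using assms by (intro card_mono) (auto simp: finite_ksubsets)
  also have "\<dots> \<le> (\<Sum>a\<in>D. card {u\<in>ksubsets A k. a \<in> u})" by (rule card_UN_le) (rule assms)
  also have "\<dots> \<le> (\<Sum>a\<in>D. (card A - 1) choose (k - 1))" by (intro sum_mono card_ksubsets_mem assms)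
  finally show ?thesis by simp
qed

lemma binom_ratio1:
  assumes "k \<ge> 1" "n \<ge> 1"
  shows "real ((n - 1) choose (k - 1)) = real k / real n * real (n choose k)"
proof -
  have "real k * real (n choose k) = real n * real ((n - 1) choose (k - 1))"
    using times_binomial_minus1_eq[of k n] assms by (metis of_nat_mult less_le_trans zero_less_one)
  thus ?thesis using assms by (simp add: field_simps)
qed

lemma binom_ratio2:
  assumes "k \<ge> 2" "n \<ge> 2"
  shows "real ((n - 2) choose (k - 2)) = real k * (real k - 1) / (real n * (real n - 1)) * real (n choose k)"
proof -
  have h1: "real ((n - 1 - 1) choose (k - 1 - 1)) = real (k - 1) / real (n - 1) * real ((n - 1) choose (k - 1))"
    by (rule binom_ratio1) (use assms in linarith)+
  have h2: "real ((n - 1) choose (k - 1)) = real k / real n * real (n choose k)"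
    by (rule binom_ratio1) (use assms in linarith)+
  have e1: "n - 1 - 1 = n - 2" "k - 1 - 1 = k - 2" by simp_all
  have e2: "real (k - 1) = real k - 1" "real (n - 1) = real n - 1" using assms by (simp_all add: of_nat_diff)
  have "real ((n - 2) choose (k - 2)) = (real k - 1) / (real n - 1) * (real k / real n * real (n choose k))"
    using h1 unfolding e1 e2 h2 .
  also have "\<dots> = real k * (real k - 1) / (real n * (real n - 1)) * real (n choose k)"
    by (simp add: mult_ac)
  finally show ?thesis .
qed

lemma card_ksubsets_mem2_real:
  assumes "finite A" "a \<noteq> b" "card A \<ge> 2"
  shows "real (card {u\<in>ksubsets A k. a \<in> u \<and> b \<in> u}) \<le> real k * (real k - 1) / (real (card A) * (real (card A) - 1)) * real (card A choose k)"
proof (cases "k \<ge> 2")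
  case True
  have "real (card {u\<in>ksubsets A k. a \<in> u \<and> b \<in> u}) \<le> real ((card A - 2) choose (k - 2))"
    using card_ksubsets_mem2[OF assms(1,2), of k] True by simp
  also have "\<dots> = real k * (real k - 1) / (real (card A) * (real (card A) - 1)) * real (card A choose k)"
    using True assms by (intro binom_ratio2) auto
  finally show ?thesis .
next
  case False
  hence "real k * (real k - 1) \<ge> 0" by (cases k) auto
  moreover have "real (card A) * (real (card A) - 1) > 0" using assms by simp
  ultimately have "0 \<le> real k * (real k - 1) / (real (card A) * (real (card A) - 1))"
    by (rule divide_nonneg_pos)
  hence "0 \<le> real k * (real k - 1) / (real (card A) * (real (card A) - 1)) * real (card A choose k)"
    by (rule mult_nonneg_nonneg) simp
  thus ?thesis using card_ksubsets_mem2[OF assms(1,2), of k] False by simp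
qed

lemma shift_sum:
  fixes Y :: "nat set \<Rightarrow> 'a::real_normed_vector"
  assumes Yb: "\<And>u. finite u \<Longrightarrow> card u = k \<Longrightarrow> norm (Y u) \<le> Cb" and Cb0: "Cb \<ge> 0"
  shows "norm ((\<Sum>u\<in>ksubsets {0..<n} k. Y u) - (\<Sum>u\<in>ksubsets {0..<n} k. Y ((\<lambda>a. a + t) ` u)))
          \<le> Cb * (2 * real t * real ((n - 1) choose (k - 1)))"
proof -
  define S where "S = ksubsets {0..<n} k"
  define S0 where "S0 = ksubsets {t..<n} k"
  define S' where "S' = ksubsets {t..<n+t} k"
  have fS: "finite S" "finite S'" "finite S0" by (auto simp: S_def S'_def S0_def finite_ksubsets)
  have sub: "S0 \<subseteq> S" "S0 \<subseteq> S'" by (auto simp: S_def S'_def S0_def ksubsets_def)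
  have img: "image (\<lambda>a. a + t) ` S = S'"
    unfolding S_def S'_def by (subst ksubsets_image) (auto simp: inj_on_def)
  have "(\<Sum>u\<in>S. Y ((\<lambda>a. a + t) ` u)) = (\<Sum>v\<in>image (\<lambda>a. a + t) ` S. Y v)"
  proof -
    have ij: "inj_on (image (\<lambda>a::nat. a + t)) S"
      by (rule inj_on_image, rule inj_on_subset[of _ UNIV]) (auto simp: inj_on_def)
    show ?thesis by (rule sum.reindex[OF ij, symmetric, unfolded comp_def])
  qed
  also have "\<dots> = (\<Sum>v\<in>S'. Y v)" by (simp add: img)
  finally have r: "(\<Sum>u\<in>S. Y ((\<lambda>a. a + t) ` u)) = (\<Sum>v\<in>S'. Y v)" .
  have d1: "(\<Sum>u\<in>S. Y u) = (\<Sum>u\<in>S - S0. Y u) + (\<Sum>u\<in>S0. Y u)"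
    using fS sub by (simp add: sum.subset_diff)
  have d2: "(\<Sum>u\<in>S'. Y u) = (\<Sum>u\<in>S' - S0. Y u) + (\<Sum>u\<in>S0. Y u)"
    using fS sub by (simp add: sum.subset_diff)
  have nb: "norm (\<Sum>u\<in>T. Y u) \<le> real (card T) * Cb" if "T \<subseteq> S \<or> T \<subseteq> S'" for T
  proof -
    have "norm (\<Sum>u\<in>T. Y u) \<le> (\<Sum>u\<in>T. norm (Y u))" by (rule norm_sum)
    also have "\<dots> \<le> (\<Sum>u\<in>T. Cb)"
      using that by (intro sum_mono Yb) (auto simp: S_def S'_def ksubsets_def)
    finally show ?thesis by simp
  qed
  have c1: "card (S - S0) \<le> t * ((n - 1) choose (k - 1))"
  proof -
    have "S - S0 \<subseteq> {u\<in>ksubsets {0..<n} k. u \<inter> {0..<t} \<noteq> {}}"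
      unfolding S_def S0_def ksubsets_def by (auto simp: subset_iff disjoint_iff)
    hence "card (S - S0) \<le> card {u\<in>ksubsets {0..<n} k. u \<inter> {0..<t} \<noteq> {}}"
      by (intro card_mono) (auto simp: finite_ksubsets)
    also have "\<dots> \<le> card {0..<t} * ((card {0..<n} - 1) choose (k - 1))"
      by (intro card_ksubsets_meet) auto
    finally show ?thesis by simp
  qed
  have c2: "card (S' - S0) \<le> t * ((n - 1) choose (k - 1))"
  proof -
    have "S' - S0 \<subseteq> {u\<in>ksubsets {t..<n+t} k. u \<inter> {n..<n+t} \<noteq> {}}"
      unfolding S'_def S0_def ksubsets_def by (auto simp: subset_iff disjoint_iff)
    hence "card (S' - S0) \<le> card {u\<in>ksubsets {t..<n+t} k. u \<inter> {n..<n+t} \<noteq> {}}"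
      by (intro card_mono) (auto simp: finite_ksubsets)
    also have "\<dots> \<le> card {n..<n+t} * ((card {t..<n+t} - 1) choose (k - 1))"
      by (intro card_ksubsets_meet) auto
    finally show ?thesis by simp
  qed
  have "(\<Sum>u\<in>S. Y u) - (\<Sum>u\<in>S. Y ((\<lambda>a. a + t) ` u)) = (\<Sum>u\<in>S - S0. Y u) - (\<Sum>u\<in>S' - S0. Y u)"
    using d1 d2 r by simp
  hence "norm ((\<Sum>u\<in>S. Y u) - (\<Sum>u\<in>S. Y ((\<lambda>a. a + t) ` u))) \<le>
     norm (\<Sum>u\<in>S - S0. Y u) + norm (\<Sum>u\<in>S' - S0. Y u)"
    by (simp add: norm_triangle_ineq4)
  also have "\<dots> \<le> real (card (S - S0)) * Cb + real (card (S' - S0)) * Cb"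
    by (intro add_mono nb) auto
  also have "\<dots> \<le> real (t * ((n - 1) choose (k - 1))) * Cb + real (t * ((n - 1) choose (k - 1))) * Cb"
    using c1 c2 Cb0 by (intro add_mono mult_right_mono) (simp_all only: of_nat_le_iff)
  finally show ?thesis unfolding S_def by (simp add: algebra_simps)
qed

lemma main_est:
  fixes Y :: "nat set \<Rightarrow> 'a::real_normed_vector"
  assumes Yb: "\<And>u. finite u \<Longrightarrow> card u = k \<Longrightarrow> norm (Y u) \<le> Cb" and Cb0: "Cb \<ge> 0"
    and k: "k \<ge> 1" and m: "m \<ge> 1" and n: "n \<ge> 2" and B0: "B \<ge> 0"
    and good: "\<And>u. finite u \<Longrightarrow> card u = k \<Longrightarrow> elt u 1 \<ge> l \<Longrightarrow>
       (\<forall>i\<in>{1..<k}. elt u i + m \<le> elt u (Suc i)) \<Longrightarrow>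
       norm (\<Sum>t<m. Y ((\<lambda>a. a + t) ` u)) \<le> real m * B"
  shows "norm (\<Sum>u\<in>ksubsets {0..<n} k. Y u) \<le> B * real (n choose k)
     + Cb * (real l * real k / real n + real m * real k * (real k - 1) / (real n - 1) + 2 * real m * real k / real n) * real (n choose k)"
proof -
  define S where "S = ksubsets {0..<n} k"
  define N where "N = real (n choose k)"
  define G where "G = (\<lambda>u. elt u 1 \<ge> l \<and> (\<forall>i\<in>{1..<k}. elt u i + m \<le> elt u (Suc i)))"
  define Bad where "Bad = {u\<in>S. \<not> G u}"
  define Z where "Z = (\<lambda>u. \<Sum>t<m. Y ((\<lambda>a. a + t) ` u))"
  have fS: "finite S" by (simp add: S_def finite_ksubsets)
  have cS: "real (card S) = N" by (simp add: S_def N_def card_ksubsets)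
  have N0: "N \<ge> 0" by (simp add: N_def)
  have c1: "real ((n - 1) choose (k - 1)) = real k / real n * N"
    using binom_ratio1[of k n] k n by (simp add: N_def)
  have E: "norm (\<Sum>t<m. (\<Sum>u\<in>S. Y u) - (\<Sum>u\<in>S. Y ((\<lambda>a. a + t) ` u)))
       \<le> real m * (Cb * (2 * real m * real ((n - 1) choose (k - 1))))"
  proof -
    have "norm (\<Sum>t<m. (\<Sum>u\<in>S. Y u) - (\<Sum>u\<in>S. Y ((\<lambda>a. a + t) ` u)))
        \<le> (\<Sum>t<m. norm ((\<Sum>u\<in>S. Y u) - (\<Sum>u\<in>S. Y ((\<lambda>a. a + t) ` u))))" by (rule norm_sum)
    also have "\<dots> \<le> (\<Sum>t<m. Cb * (2 * real m * real ((n - 1) choose (k - 1))))"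
    proof (intro sum_mono)
      fix t assume "t \<in> {..<m}"
      hence "Cb * (2 * real t * real ((n - 1) choose (k - 1))) \<le> Cb * (2 * real m * real ((n - 1) choose (k - 1)))"
        using Cb0 by (intro mult_left_mono mult_right_mono) auto
      thus "norm ((\<Sum>u\<in>S. Y u) - (\<Sum>u\<in>S. Y ((\<lambda>a. a + t) ` u))) \<le> Cb * (2 * real m * real ((n - 1) choose (k - 1)))"
        using shift_sum[where Y=Y and k=k and Cb=Cb and n=n and t=t, OF Yb Cb0] unfolding S_def by linarith
    qed
    finally show ?thesis by simp
  qed
  have Zb: "norm (Z u) \<le> real m * B + (if u \<in> Bad then real m * Cb else 0)" if u: "u \<in> S" for u
  proof -
    have fu: "finite u" "card u = k" using u by (auto simp: S_def ksubsets_def)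
    have "norm (Z u) \<le> (\<Sum>t<m. norm (Y ((\<lambda>a. a + t) ` u)))" unfolding Z_def by (rule norm_sum)
    also have "\<dots> \<le> (\<Sum>t<m. Cb)"
      using fu by (intro sum_mono Yb) (auto simp: card_image inj_on_def)
    finally have Z1: "norm (Z u) \<le> real m * Cb" by simp
    show ?thesis
    proof (cases "u \<in> Bad")
      case True thus ?thesis using Z1 B0 m by (simp add: add_increasing)
    next
      case False
      hence "G u" using u by (simp add: Bad_def)
      thus ?thesis using good[OF fu] False unfolding G_def Z_def by simp
    qed
  qed
  have cBad: "real (card Bad) \<le> real l * (real k / real n * N) + real n * real m * (real k * (real k - 1) / (real n * (real n - 1)) * N)"
  proof -
    define P where "P = (\<lambda>a d. {u\<in>ksubsets {0..<n} k. a \<in> u \<and> a + d \<in> u})"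
    have "Bad \<subseteq> {u\<in>ksubsets {0..<n} k. u \<inter> {0..<l} \<noteq> {}} \<union> (\<Union>a\<in>{0..<n}. \<Union>d\<in>{1..<m}. P a d)"
    proof
      fix u assume "u \<in> Bad"
      hence u: "u \<in> S" "\<not> G u" by (auto simp: Bad_def)
      have fu: "finite u" "card u = k" "u \<subseteq> {0..<n}" using u by (auto simp: S_def ksubsets_def)
      show "u \<in> {u\<in>ksubsets {0..<n} k. u \<inter> {0..<l} \<noteq> {}} \<union> (\<Union>a\<in>{0..<n}. \<Union>d\<in>{1..<m}. P a d)"
      proof (cases "elt u 1 < l")
        case True
        have "elt u 1 \<in> u" using fu k by (intro elt_in) auto
        thus ?thesis using True u(1) by (auto simp: S_def)
      next
        case False
        then obtain i where i: "i \<in> {1..<k}" "elt u (Suc i) < elt u i + m" using u(2) by (auto simp: G_def)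
        have a: "elt u i \<in> u" "elt u (Suc i) \<in> u" using fu i by (auto intro!: elt_in)
        have lt: "elt u i < elt u (Suc i)" using fu i by (intro elt_less) auto
        define d where "d = elt u (Suc i) - elt u i"
        have "u \<in> P (elt u i) d" using a lt u(1) by (auto simp: P_def d_def S_def)
        moreover have "d \<in> {1..<m}" using lt i by (auto simp: d_def)
        moreover have "elt u i \<in> {0..<n}" using a fu by auto
        ultimately show ?thesis by blast
      qed
    qed
    hence "card Bad \<le> card ({u\<in>ksubsets {0..<n} k. u \<inter> {0..<l} \<noteq> {}} \<union> (\<Union>a\<in>{0..<n}. \<Union>d\<in>{1..<m}. P a d))"
      by (intro card_mono) (auto simp: finite_ksubsets P_def)
    also have "\<dots> \<le> card {u\<in>ksubsets {0..<n} k. u \<inter> {0..<l} \<noteq> {}} + card (\<Union>a\<in>{0..<n}. \<Union>d\<in>{1..<m}. P a d)"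
      by (rule card_Un_le)
    finally have cU: "card Bad \<le> card {u\<in>ksubsets {0..<n} k. u \<inter> {0..<l} \<noteq> {}} + card (\<Union>a\<in>{0..<n}. \<Union>d\<in>{1..<m}. P a d)" .
    have "card (\<Union>a\<in>{0..<n}. \<Union>d\<in>{1..<m}. P a d) \<le> (\<Sum>a\<in>{0..<n}. card (\<Union>d\<in>{1..<m}. P a d))"
      by (rule card_UN_le) simp
    also have "\<dots> \<le> (\<Sum>a\<in>{0..<n}. \<Sum>d\<in>{1..<m}. card (P a d))"
      by (intro sum_mono card_UN_le) simp
    finally have cU2: "card (\<Union>a\<in>{0..<n}. \<Union>d\<in>{1..<m}. P a d) \<le> (\<Sum>a\<in>{0..<n}. \<Sum>d\<in>{1..<m}. card (P a d))" .
    have c0: "card Bad \<le> card {u\<in>ksubsets {0..<n} k. u \<inter> {0..<l} \<noteq> {}} + (\<Sum>a\<in>{0..<n}. \<Sum>d\<in>{1..<m}. card (P a d))"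
      using cU cU2 by linarith
    hence c00: "real (card Bad) \<le> real (card {u\<in>ksubsets {0..<n} k. u \<inter> {0..<l} \<noteq> {}} + (\<Sum>a\<in>{0..<n}. \<Sum>d\<in>{1..<m}. card (P a d)))"
      by (simp only: of_nat_le_iff)
    have c: "real (card Bad) \<le> real (card {u\<in>ksubsets {0..<n} k. u \<inter> {0..<l} \<noteq> {}}) + (\<Sum>a\<in>{0..<n}. \<Sum>d\<in>{1..<m}. real (card (P a d)))"
      using c00 by (simp only: of_nat_add of_nat_sum)
    have "real (card {u\<in>ksubsets {0..<n} k. u \<inter> {0..<l} \<noteq> {}}) \<le> real (card {0..<l} * ((card {0..<n} - 1) choose (k - 1)))"
      by (simp only: of_nat_le_iff) (intro card_ksubsets_meet; simp)
    also have "\<dots> = real l * (real k / real n * N)" using c1 by simp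
    finally have c2: "real (card {u\<in>ksubsets {0..<n} k. u \<inter> {0..<l} \<noteq> {}}) \<le> real l * (real k / real n * N)" .
    have "(\<Sum>a\<in>{0..<n}. \<Sum>d\<in>{1..<m}. real (card (P a d))) \<le> (\<Sum>a\<in>{0..<n}. \<Sum>d\<in>{1..<m}. real k * (real k - 1) / (real n * (real n - 1)) * N)"
    proof (intro sum_mono)
      fix a d assume "d \<in> {1..<m}"
      hence "a \<noteq> a + d" by auto
      thus "real (card (P a d)) \<le> real k * (real k - 1) / (real n * (real n - 1)) * N"
        using card_ksubsets_mem2_real[of "{0..<n}" a "a + d" k] n by (simp add: P_def N_def)
    qed
    also have "\<dots> = real n * (real (m - 1)) * (real k * (real k - 1) / (real n * (real n - 1)) * N)" by simp
    also have "\<dots> \<le> real n * real m * (real k * (real k - 1) / (real n * (real n - 1)) * N)"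
    proof -
      have "real k * (real k - 1) \<ge> 0" using k by simp
      hence "0 \<le> real k * (real k - 1) / (real n * (real n - 1)) * N" using n N0 by simp
      thus ?thesis by (intro mult_right_mono mult_left_mono) auto
    qed
    finally show ?thesis using c c2 by linarith
  qed
  have "norm (\<Sum>u\<in>S. Z u) \<le> (\<Sum>u\<in>S. norm (Z u))" by (rule norm_sum)
  also have "\<dots> \<le> (\<Sum>u\<in>S. real m * B + (if u \<in> Bad then real m * Cb else 0))" by (intro sum_mono Zb)
  also have "\<dots> = real m * B * N + real m * Cb * real (card Bad)"
  proof -
    have "Bad \<subseteq> S" by (auto simp: Bad_def)
    hence "S \<inter> Bad = Bad" by blast
    thus ?thesis using fS cS by (simp add: sum.distrib sum.If_cases)
  qed
  finally have ZS: "norm (\<Sum>u\<in>S. Z u) \<le> real m * B * N + real m * Cb * real (card Bad)" .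
  have eq: "real m *\<^sub>R (\<Sum>u\<in>S. Y u) = (\<Sum>t<m. (\<Sum>u\<in>S. Y u) - (\<Sum>u\<in>S. Y ((\<lambda>a. a + t) ` u))) + (\<Sum>u\<in>S. Z u)"
  proof -
    have s1: "(\<Sum>t<m. (\<Sum>u\<in>S. Y u) - (\<Sum>u\<in>S. Y ((\<lambda>a. a + t) ` u))) = (\<Sum>t<m. (\<Sum>u\<in>S. Y u)) - (\<Sum>t<m. \<Sum>u\<in>S. Y ((\<lambda>a. a + t) ` u))"
      by (rule sum_subtractf)
    have s2: "(\<Sum>u\<in>S. Z u) = (\<Sum>t<m. \<Sum>u\<in>S. Y ((\<lambda>a. a + t) ` u))"
      unfolding Z_def by (rule sum.swap)
    have s3: "(\<Sum>t<m. (\<Sum>u\<in>S. Y u)) = real m *\<^sub>R (\<Sum>u\<in>S. Y u)"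
      by (simp add: sum_constant_scaleR)
    show ?thesis unfolding s1 s2 s3 by simp
  qed
  have "real m * norm (\<Sum>u\<in>S. Y u) = norm (real m *\<^sub>R (\<Sum>u\<in>S. Y u))" by simp
  also have "\<dots> \<le> real m * (Cb * (2 * real m * real ((n - 1) choose (k - 1)))) + (real m * B * N + real m * Cb * real (card Bad))"
    unfolding eq by (intro order.trans[OF norm_triangle_ineq] add_mono E ZS)
  also have "\<dots> = real m * (Cb * (2 * real m * real ((n - 1) choose (k - 1))) + B * N + Cb * real (card Bad))"
    by (simp add: algebra_simps)
  finally have "norm (\<Sum>u\<in>S. Y u) \<le> Cb * (2 * real m * real ((n - 1) choose (k - 1))) + B * N + Cb * real (card Bad)"
    using m by (simp only: mult_le_cancel_left_pos of_nat_0_less_iff)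
  also have "\<dots> \<le> Cb * (2 * real m * (real k / real n * N)) + B * N +
       Cb * (real l * (real k / real n * N) + real n * real m * (real k * (real k - 1) / (real n * (real n - 1)) * N))"
    using cBad Cb0 c1 B0 N0 by (intro add_mono mult_left_mono) auto
  also have "\<dots> = B * N + Cb * (real l * real k / real n + real m * real k * (real k - 1) / (real n - 1) + 2 * real m * real k / real n) * N"
    using n by (simp add: field_simps)
  finally show ?thesis by (simp add: S_def N_def)
qed


lemma enum_le:
  fixes M :: "nat set"
  assumes "infinite M" "strict_mono r" "\<And>p. r p \<in> M"
  shows "enumerate M p \<le> r p"
proof (induction p)
  case 0
  show ?case using assms(3)[of 0] by (simp add: enumerate_0 Least_le)
next
  case (Suc p)
  have "r p < r (Suc p)" using assms(2) by (simp add: strict_mono_def)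
  hence "enumerate M p < r (Suc p)" using Suc by linarith
  thus ?case using assms(1,3) by (simp add: enumerate_Suc'' Least_le)
qed

theorem mainTheorem14:
  fixes x :: "nat set \<Rightarrow> 'a::banach" and k :: nat and M :: "nat set"
    and nrm :: "(nat \<Rightarrow> real) \<Rightarrow> real"
  assumes "k \<ge> 1"
    and "bounded (x ` ksubsets UNIV k)"
    and "infinite M"
    and "is_seminorm_on_coeffs nrm"
    and "generates_spreading_model x M k nrm"
    and "(\<lambda>n. nrm (sm_coeffs n (\<lambda>i. 1 / real n))) \<longlonglongrightarrow> 0"
  shows "\<forall>L. L \<subseteq> M \<and> infinite L \<longrightarrow> k_cesaro_summable x L k 0"
proof (intro allI impI)
  fix L assume LM: "L \<subseteq> M \<and> infinite L"
  hence Linf: "infinite L" and LsM: "L \<subseteq> M" by auto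
  define f where "f = enumerate L"
  have fmono: "strict_mono f" unfolding f_def using Linf by (intro strict_monoI enumerate_mono)
  have finj: "inj f" using fmono by (rule strict_mono_imp_inj_on)
  have fL: "f p \<in> L" for p unfolding f_def using Linf by (rule enumerate_in_set)
  have fM: "enumerate M p \<le> f p" for p
    using enum_le[OF assms(3) fmono] fL LsM by blast
  define Y where "Y = (\<lambda>u. x (f ` u))"
  define \<nu> where "\<nu> = (\<lambda>n. nrm (sm_coeffs n (\<lambda>i. 1 / real n)))"
  obtain Cb where Cb: "\<And>y. y \<in> x ` ksubsets UNIV k \<Longrightarrow> norm y \<le> Cb"
    using assms(2) by (auto simp: bounded_iff)
  have Yb: "norm (Y u) \<le> Cb" if "finite u" "card u = k" for u
  proof -
    have "f ` u \<in> ksubsets UNIV k" using that finj by (auto simp: ksubsets_def card_image inj_on_subset)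
    thus ?thesis unfolding Y_def by (intro Cb) auto
  qed
  have "norm (Y {0..<k}) \<le> Cb" by (rule Yb) simp_all
  hence Cb0: "Cb \<ge> 0" using norm_ge_zero[of "Y {0..<k}"] by linarith
  obtain \<delta> :: "nat \<Rightarrow> real" where \<delta>: "\<And>l. \<delta> l > 0" "\<delta> \<longlonglongrightarrow> 0" and
    SM0: "\<forall>l m ss a. 1 \<le> m \<and> m \<le> l \<and> (\<forall>j\<in>{1..m}. ss j \<in> ksubsets M k) \<and> plegma k ss m \<and>
          elt (ss 1) 1 \<ge> nth_el M l \<and> (\<forall>j\<in>{1..m}. \<bar>a j\<bar> \<le> 1) \<longrightarrow>
          \<bar>norm (\<Sum>j=1..m. a j *\<^sub>R x (ss j)) - nrm (sm_coeffs m a)\<bar> \<le> \<delta> l"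
    using assms(5) unfolding generates_spreading_model_def by blast
  have SM: "\<And>l m ss a. 1 \<le> m \<Longrightarrow> m \<le> l \<Longrightarrow> (\<forall>j\<in>{1..m}. ss j \<in> ksubsets M k) \<Longrightarrow> plegma k ss m \<Longrightarrow>
          elt (ss 1) 1 \<ge> nth_el M l \<Longrightarrow> (\<forall>j\<in>{1..m}. \<bar>a j\<bar> \<le> 1) \<Longrightarrow>
          \<bar>norm (\<Sum>j=1..m. a j *\<^sub>R x (ss j)) - nrm (sm_coeffs m a)\<bar> \<le> \<delta> l"
    using SM0 by blast
  have good: "norm (\<Sum>t<m. Y ((\<lambda>a. a + t) ` u)) \<le> real m * (\<bar>\<nu> m\<bar> + \<delta> l)"
    if m: "1 \<le> m" "m \<le> l" and u: "finite u" "card u = k" "elt u 1 \<ge> l"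
      "\<forall>i\<in>{1..<k}. elt u i + m \<le> elt u (Suc i)" for m l u
  proof -
    define ss where "ss = (\<lambda>j. f ` ((\<lambda>a. a + (j - 1)) ` u))"
    have ssi: "ss j = (\<lambda>a. f (a + (j - 1))) ` u" for j by (auto simp: ss_def)
    have elts: "elt (ss j) i = f (elt u i + (j - 1))" if "1 \<le> i" "i \<le> k" for i j
    proof -
      have "strict_mono (\<lambda>a. f (a + (j - 1)))" using fmono by (simp add: strict_mono_def)
      thus ?thesis unfolding ssi using that u by (subst elt_image_mono) auto
    qed
    have inK: "ss j \<in> ksubsets M k" for j
    proof -
      have "strict_mono (\<lambda>a. f (a + (j - 1)))" using fmono by (simp add: strict_mono_def)
      hence "inj (\<lambda>a. f (a + (j - 1)))" by (rule strict_mono_imp_inj_on)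
      thus ?thesis unfolding ssi using u fL LsM
        by (auto simp: ksubsets_def card_image inj_on_subset)
    qed
    have pl: "plegma k ss m"
      unfolding plegma_def
    proof (intro conjI ballI)
      fix i j assume i: "i \<in> {1..k}" and j: "j \<in> {1..<m}"
      show "elt (ss j) i < elt (ss (Suc j)) i" using i j fmono
        by (simp add: elts strict_mono_less)
    next
      fix i assume i: "i \<in> {1..<k}"
      have "elt u i + m \<le> elt u (Suc i)" using u(4) i by blast
      hence "elt u i + (m - 1) < elt u (Suc i) + (1 - 1)" using m by linarith
      thus "elt (ss m) i < elt (ss 1) (Suc i)" using i fmono
        by (simp add: elts strict_mono_less del: diff_self_eq_0)
    qed
    have st: "elt (ss 1) 1 \<ge> nth_el M l"
    proof -
      have "elt (ss 1) 1 = f (elt u 1)" using assms(1) by (simp add: elts)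
      moreover have "f (l - 1) \<le> f (elt u 1)" using u(3) fmono by (simp add: strict_mono_less_eq)
      ultimately show ?thesis using fM[of "l - 1"] by (simp add: nth_el_def)
    qed
    have h1: "\<bar>norm (\<Sum>j=1..m. (\<lambda>j. 1 / real m) j *\<^sub>R x (ss j)) - nrm (sm_coeffs m (\<lambda>j. 1 / real m))\<bar> \<le> \<delta> l"
      using m inK by (intro SM pl st) auto
    have h2: "(\<Sum>j=1..m. (\<lambda>j. 1 / real m) j *\<^sub>R x (ss j)) = (1 / real m) *\<^sub>R (\<Sum>t<m. Y ((\<lambda>a. a + t) ` u))"
      by (simp add: sum.atLeast1_atMost_eq scaleR_sum_right ss_def Y_def)
    have h3: "\<bar>norm ((1 / real m) *\<^sub>R (\<Sum>t<m. Y ((\<lambda>a. a + t) ` u))) - \<nu> m\<bar> \<le> \<delta> l"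
      using h1 unfolding h2 \<nu>_def .
    have "norm ((1 / real m) *\<^sub>R (\<Sum>t<m. Y ((\<lambda>a. a + t) ` u))) \<le> \<bar>\<nu> m\<bar> + \<delta> l"
      using h3 abs_ge_self[of "\<nu> m"] by (simp add: abs_le_iff)
    thus ?thesis using m by (simp add: field_simps)
  qed
  have restr: "restr L n = f ` {0..<n}" for n
  proof -
    have "(\<lambda>i. i - 1) ` {1..n} = {0..<n}"
      by (auto simp: image_iff intro!: bexI[of _ "Suc _"])
    hence "f ` ((\<lambda>i. i - 1) ` {1..n}) = f ` {0..<n}" by simp
    thus ?thesis by (simp add: restr_def nth_el_def f_def image_image)
  qed
  have sumeq: "(\<Sum>s\<in>ksubsets (restr L n) k. x s) = (\<Sum>u\<in>ksubsets {0..<n} k. Y u)" for n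
  proof -
    have "ksubsets (restr L n) k = image f ` ksubsets {0..<n} k"
      unfolding restr using finj by (simp add: ksubsets_image inj_on_subset)
    thus ?thesis unfolding Y_def
      by (simp add: sum.reindex inj_on_image inj_on_subset[OF finj])
  qed
  show "k_cesaro_summable x L k 0"
    unfolding k_cesaro_summable_def LIMSEQ_iff
  proof (intro allI impI)
    fix r :: real assume r: "r > 0"
    obtain N0 where N0: "\<And>n. n \<ge> N0 \<Longrightarrow> norm (\<nu> n - 0) < r / 3"
      using assms(6) r unfolding LIMSEQ_iff \<nu>_def by (metis divide_pos_pos zero_less_numeral)
    define m where "m = Suc N0"
    have m1: "m \<ge> 1" and num: "\<bar>\<nu> m\<bar> < r / 3" using N0[of m] by (auto simp: m_def)
    obtain N1 where N1: "\<And>n. n \<ge> N1 \<Longrightarrow> norm (\<delta> n - 0) < r / 3"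
      using \<delta>(2) r unfolding LIMSEQ_iff by (metis divide_pos_pos zero_less_numeral)
    define l where "l = max m N1"
    have ml: "m \<le> l" and dl: "\<delta> l < r / 3" using N1[of l] by (auto simp: l_def)
    define e where "e = (\<lambda>n::nat. Cb * (real l * real k / real n + real m * real k * (real k - 1) / (real n - 1) + 2 * real m * real k / real n))"
    have "e \<longlonglongrightarrow> 0" unfolding e_def by real_asymp
    then obtain N2 where N2: "\<And>n. n \<ge> N2 \<Longrightarrow> norm (e n - 0) < r / 3"
      using r unfolding LIMSEQ_iff by (metis divide_pos_pos zero_less_numeral)
    show "\<exists>no. \<forall>n\<ge>no. norm ((1 / real (n choose k)) *\<^sub>R (\<Sum>s\<in>ksubsets (restr L n) k. x s) - 0) < r"
    proof (intro exI allI impI)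
      fix n assume n: "n \<ge> max N2 2"
      define C where "C = real (n choose k)"
      have B0: "\<bar>\<nu> m\<bar> + \<delta> l \<ge> 0" using \<delta>(1)[of l] by simp
      have n2: "n \<ge> 2" using n by simp
      have me: "norm (\<Sum>u\<in>ksubsets {0..<n} k. Y u) \<le> (\<bar>\<nu> m\<bar> + \<delta> l) * real (n choose k)
     + Cb * (real l * real k / real n + real m * real k * (real k - 1) / (real n - 1) + 2 * real m * real k / real n) * real (n choose k)"
        by (rule main_est[where k=k and Cb=Cb and Y=Y and m=m and n=n and B="\<bar>\<nu> m\<bar> + \<delta> l" and l=l, OF Yb Cb0 assms(1) m1 n2 B0 good[OF m1 ml]])
      have est: "norm (\<Sum>u\<in>ksubsets {0..<n} k. Y u) \<le> (\<bar>\<nu> m\<bar> + \<delta> l) * C + e n * C"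
        using me unfolding e_def C_def .
      have en: "e n < r / 3" using N2[of n] n by simp
      show "norm ((1 / real (n choose k)) *\<^sub>R (\<Sum>s\<in>ksubsets (restr L n) k. x s) - 0) < r"
      proof (cases "C = 0")
        case True
        hence z: "real (n choose k) = 0" unfolding C_def .
        show ?thesis using r by (simp only: z) simp
      next
        case False
        hence C0: "C > 0" by (simp add: C_def)
        have "norm ((1 / real (n choose k)) *\<^sub>R (\<Sum>s\<in>ksubsets (restr L n) k. x s) - 0)
            = norm (\<Sum>u\<in>ksubsets {0..<n} k. Y u) / C" by (simp add: sumeq C_def)
        also have "\<dots> \<le> ((\<bar>\<nu> m\<bar> + \<delta> l) * C + e n * C) / C" using est C0 by (simp add: divide_right_mono)
        also have "\<dots> = \<bar>\<nu> m\<bar> + \<delta> l + e n" using C0 by (simp add: field_simps)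
        also have "\<dots> < r" using num dl en by linarith
        finally show ?thesis .
      qed
    qed
  qed
qed

end
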